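(* Let $\mathcal L_{\mathcal N}=(\mathcal L,[\cdot_\lambda\cdot]_{\mathcal L},\mathcal N)$ and $\mathcal H_{\mathcal Q}=(\mathcal H,[\cdot_\lambda\cdot]_{\mathcal H},\mathcal Q)$ be Nijenhuis Lie conformal algebras, let $(\chi_\lambda,\rho,\Phi)$ be a non-abelian $2$-cocycle of $\mathcal L_{\mathcal N}$ with values in $\mathcal H_{\mathcal Q}$ (arising from a non-abelian extension of $\mathcal L_{\mathcal N}$ by $\mathcal H_{\mathcal Q}$ and a section), and let $(\alpha,\beta)\in\mathrm{Aut}(\mathcal H_{\mathcal Q})\times\mathrm{Aut}(\mathcal L_{\mathcal N})$. Define $$\chi^{(\alpha,\beta)}_\lambda(p,q):=\alpha\big(\chi_\lambda(\beta^{-1}(p),\beta^{-1}(q))\big),\quad \rho^{(\alpha,\beta)}(p)_\lambda h:=\alpha\big(\rho(\beta^{-1}(p))_\lambda\alpha^{-1}(h)\big),\quad \Phi^{(\alpha,\beta)}(p):=\alpha\big(\Phi(\beta^{-1}(p))\big)$$ for $p,q\in\mathcal L$, $h\in\mathcal H$. Then $(\chi^{(\alpha,\beta)}_\lambda,\rho^{(\alpha,\beta)},\Phi^{(\alpha,\beta)})$ is a non-abelian $2$-cocycle of $\mathcal L_{\mathcal N}$ with values in $\mathcal H_{\mathcal Q}$.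
   Context: All spaces are over $\mathbb C$. A Lie conformal algebra is a $\mathbb C[\partial]$-module with a $\mathbb C$-bilinear $\lambda$-bracket satisfying $[\partial a_\lambda b]=-\lambda[a_\lambda b]$, $[a_\lambda\partial b]=(\partial+\lambda)[a_\lambda b]$, $[a_\lambda b]=-[b_{-\partial-\lambda}a]$, $[a_\lambda[b_\mu c]]=[[a_\lambda b]_{\lambda+\mu}c]+[b_\mu[a_\lambda c]]$. A Nijenhuis operator is a $\mathbb C[\partial]$-linear $\mathcal N$ with $[\mathcal N(p)_\lambda\mathcal N(q)]=\mathcal N([\mathcal N(p)_\lambda q]+[p_\lambda\mathcal N(q)]-\mathcal N([p_\lambda q]))$; a Nijenhuis Lie conformal algebra is a Lie conformal algebra with a Nijenhuis operator; $\mathrm{Aut}(\cdot)$ is the group of bijective bracket-preserving $\mathbb C[\partial]$-linear self-maps commuting with the Nijenhuis operator. A non-abelian $2$-cocycle of $\mathcal L_{\mathcal N}$ with values in $\mathcal H_{\mathcal Q}$ is a triple $\chi_\lambda:\mathcal L\otimes\mathcal L\to\mathcal H[\lambda]$, $\rho:\mathcal L\otimes\mathcal H\to\mathcal H[\lambda]$, $\Phi:\mathcal L\to\mathcal H$ satisfying for all $p,q,r\in\mathcal L$, $h\in\mathcal H$: (i) $\rho(p)_\lambda\rho(q)_\mu h-\rho(q)_\mu\rho(p)_\lambda h-\rho([p_\lambda q]_{\mathcal L})_{\lambda+\mu}h=[\chi_\lambda(p,q)_{\lambda+\mu}h]_{\mathcal H}$; (ii) $\rho(p)_\lambda\chi_\mu(q,r)+\rho(q)_\mu\chi_\lambda(r,p)+\rho(r)_{-\partial-\lambda-\mu}\chi_\lambda(p,q)-\chi_{\lambda+\mu}([q_\mu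 r]_{\mathcal L},p)-\chi_{\lambda+\mu}([r_{-\partial-\lambda}p]_{\mathcal L},q)-\chi_{\lambda+\mu}([p_\lambda q]_{\mathcal L},r)=0$; (iii) $\rho(\mathcal Np)_\lambda\mathcal Q(h)=\mathcal Q(\rho(\mathcal Np)_\lambda h+\rho(p)_\lambda\mathcal Q(h)-\mathcal Q(\rho(p)_\lambda h))+\mathcal Q([\Phi(p)_\lambda h]_{\mathcal H})-[\Phi(p)_\lambda\mathcal Q(h)]_{\mathcal H}$; (iv) $\chi_\lambda(\mathcal Np,\mathcal Nq)-\mathcal Q(\chi_\lambda(\mathcal Np,q)+\chi_\lambda(p,\mathcal Nq)-\mathcal Q\chi_\lambda(p,q))-\Phi([\mathcal N(p)_\lambda q]_{\mathcal L}+[p_\lambda\mathcal N(q)]_{\mathcal L}-\mathcal N[p_\lambda q]_{\mathcal L})+\rho(\mathcal Np)_\lambda\Phi(q)-\rho(\mathcal Nq)_{-\partial-\lambda}\Phi(p)+\mathcal Q(\rho(q)_{-\partial-\lambda}\Phi(p)-\rho(p)_\lambda\Phi(q)+\Phi([p_\lambda q]_{\mathcal L}))+[\Phi(p)_\lambda\Phi(q)]_{\mathcal H}=0$. Such a triple arises from a non-abelian extension $0\to\mathcal H_{\mathcal Q}\to\mathcal E_{\mathcal R}\xrightarrow{proj}\mathcal L_{\mathcal N}\to0$ (a $\mathbb C[\partial]$-split short exact sequence of Nijenhuis Lie conformal algebras) and a $\mathbb C[\partial]$-linear section $s$ of $proj$ via $\chi_\lambda(p,q)=[s(p)_\lambda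 s(q)]_{\mathcal E}-s([p_\lambda q]_{\mathcal L})$, $\rho(p)_\lambda h=[s(p)_\lambda h]_{\mathcal E}$, $\Phi(p)=\mathcal R(s(p))-s(\mathcal N(p))$. *)

theory Defs
  imports "HOL-Computational_Algebra.Polynomial"
begin

(* A (Nijenhuis) Lie conformal algebra on a carrier type 'a:
   scal = complex scalar multiplication, der = the operator \<partial>,
   brk a b = [a_\<lambda> b] \<in> 'a[\<lambda>] (a polynomial in \<lambda> with coefficients in 'a),
   nij = the Nijenhuis operator. *)
declare [[typedef_overloaded]]

record 'a nlca =
  scal :: "complex \<Rightarrow> 'a \<Rightarrow> 'a"
  der  :: "'a \<Rightarrow> 'a"
  brk  :: "'a \<Rightarrow> 'a \<Rightarrow> 'a poly"
  nij  :: "'a \<Rightarrow> 'a"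

(* Elements of M[\<lambda>,\<mu>] are represented by their coefficient functions:
   F i j = coefficient of \<lambda>^i \<mu>^j. *)

definition multinom :: "nat \<Rightarrow> nat \<Rightarrow> nat \<Rightarrow> nat" where
  "multinom x y z = fact (x + y + z) div (fact x * fact y * fact z)"

(* For p = \<Sum>_n \<nu>^n c_n \<in> M[\<nu>], psub s d e a b p is the element of M[\<lambda>,\<mu>]
   obtained by substituting \<nu> := e\<partial> + a\<lambda> + b\<mu>, where \<partial> acts on the coefficients:
   (e\<partial>+a\<lambda>+b\<mu>)^n c = \<Sum>_{x+y+z=n} n!/(x!y!z!) e^x a^y b^z \<lambda>^y \<mu>^z \<partial>^x c. *)
definition psub :: "(complex \<Rightarrow> 'm::ab_group_add \<Rightarrow> 'm) \<Rightarrow> ('m \<Rightarrow> 'm)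
      \<Rightarrow> complex \<Rightarrow> complex \<Rightarrow> complex \<Rightarrow> 'm poly \<Rightarrow> nat \<Rightarrow> nat \<Rightarrow> 'm" where
  "psub s d e a b p y z =
     (\<Sum>x\<in>{..degree p}. s (of_nat (multinom x y z) * e ^ x * a ^ y * b ^ z)
                         ((d ^^ x) (coeff p (x + y + z))))"

(* \<Sum>_k \<lambda>^k F_k  and  \<Sum>_k \<mu>^k F_k  for a family of elements F_k of M[\<lambda>,\<mu>] *)
definition lam_fam :: "(nat \<Rightarrow> nat \<Rightarrow> nat \<Rightarrow> 'm::comm_monoid_add) \<Rightarrow> nat \<Rightarrow> nat \<Rightarrow> 'm" where
  "lam_fam F i j = (\<Sum>k\<in>{..i}. F k (i - k) j)"

definition mu_fam :: "(nat \<Rightarrow> nat \<Rightarrow> nat \<Rightarrow> 'm::comm_monoid_add) \<Rightarrow> nat \<Rightarrow> nat \<Rightarrow> 'm" where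
  "mu_fam F i j = (\<Sum>k\<in>{..j}. F k i (j - k))"

definition cdmod :: "(complex \<Rightarrow> 'm::ab_group_add \<Rightarrow> 'm) \<Rightarrow> ('m \<Rightarrow> 'm) \<Rightarrow> bool" where
  "cdmod s d \<longleftrightarrow> vector_space s \<and> (\<forall>x y. d (x + y) = d x + d y) \<and> (\<forall>c x. d (s c x) = s c (d x))"

definition cdlin :: "(complex \<Rightarrow> 'm::ab_group_add \<Rightarrow> 'm) \<Rightarrow> ('m \<Rightarrow> 'm)
      \<Rightarrow> (complex \<Rightarrow> 'n::ab_group_add \<Rightarrow> 'n) \<Rightarrow> ('n \<Rightarrow> 'n) \<Rightarrow> ('m \<Rightarrow> 'n) \<Rightarrow> bool" where
  "cdlin s1 d1 s2 d2 f \<longleftrightarrow> (\<forall>x y. f (x + y) = f x + f y) \<and> (\<forall>c x. f (s1 c x) = s2 c (f x))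
      \<and> (\<forall>x. f (d1 x) = d2 (f x))"

definition clin :: "(complex \<Rightarrow> 'm::ab_group_add \<Rightarrow> 'm) \<Rightarrow> (complex \<Rightarrow> 'n::ab_group_add \<Rightarrow> 'n)
      \<Rightarrow> ('m \<Rightarrow> 'n) \<Rightarrow> bool" where
  "clin s1 s2 f \<longleftrightarrow> (\<forall>x y. f (x + y) = f x + f y) \<and> (\<forall>c x. f (s1 c x) = s2 c (f x))"

definition cbilin :: "(complex \<Rightarrow> 'm::ab_group_add \<Rightarrow> 'm) \<Rightarrow> (complex \<Rightarrow> 'n::ab_group_add \<Rightarrow> 'n)
      \<Rightarrow> (complex \<Rightarrow> 'p::ab_group_add \<Rightarrow> 'p) \<Rightarrow> ('m \<Rightarrow> 'n \<Rightarrow> 'p poly) \<Rightarrow> bool" where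
  "cbilin s1 s2 s3 f \<longleftrightarrow>
     (\<forall>x y z n. coeff (f (x + y) z) n = coeff (f x z) n + coeff (f y z) n) \<and>
     (\<forall>x y z n. coeff (f x (y + z)) n = coeff (f x y) n + coeff (f x z) n) \<and>
     (\<forall>c x z n. coeff (f (s1 c x) z) n = s3 c (coeff (f x z) n)) \<and>
     (\<forall>c x z n. coeff (f x (s2 c z)) n = s3 c (coeff (f x z) n))"

definition lie_conf :: "'a::ab_group_add nlca \<Rightarrow> bool" where
  "lie_conf L \<longleftrightarrow>
     cdmod (scal L) (der L) \<and>
     cbilin (scal L) (scal L) (scal L) (brk L) \<and>
     \<comment> \<open>[\<partial>a_\<lambda> b] = -\<lambda>[a_\<lambda> b]\<close>
     (\<forall>a b n. coeff (brk L (der L a) b) n = - (if n = 0 then 0 else coeff (brk L a b) (n - 1))) \<and>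
     \<comment> \<open>[a_\<lambda> \<partial>b] = (\<partial>+\<lambda>)[a_\<lambda> b]\<close>
     (\<forall>a b n. coeff (brk L a (der L b)) n =
        der L (coeff (brk L a b) n) + (if n = 0 then 0 else coeff (brk L a b) (n - 1))) \<and>
     \<comment> \<open>[a_\<lambda> b] = -[b_{-\<partial>-\<lambda>} a]\<close>
     (\<forall>a b n. coeff (brk L a b) n = - psub (scal L) (der L) (-1) (-1) 0 (brk L b a) n 0) \<and>
     \<comment> \<open>[a_\<lambda>[b_\<mu> c]] = [[a_\<lambda> b]_{\<lambda>+\<mu>} c] + [b_\<mu>[a_\<lambda> c]]\<close>
     (\<forall>a b c i j. coeff (brk L a (coeff (brk L b c) j)) i =
        lam_fam (\<lambda>k. psub (scal L) (der L) 0 1 1 (brk L (coeff (brk L a b) k) c)) i j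
        + coeff (brk L b (coeff (brk L a c) i)) j)"

definition nij_lca :: "'a::ab_group_add nlca \<Rightarrow> bool" where
  "nij_lca L \<longleftrightarrow> lie_conf L \<and> cdlin (scal L) (der L) (scal L) (der L) (nij L) \<and>
     (\<forall>p q n. coeff (brk L (nij L p) (nij L q)) n =
        nij L (coeff (brk L (nij L p) q) n + coeff (brk L p (nij L q)) n
               - nij L (coeff (brk L p q) n)))"

definition nlca_aut :: "'a::ab_group_add nlca \<Rightarrow> ('a \<Rightarrow> 'a) \<Rightarrow> bool" where
  "nlca_aut L f \<longleftrightarrow> bij f \<and> cdlin (scal L) (der L) (scal L) (der L) f \<and>
     (\<forall>a b n. f (coeff (brk L a b) n) = coeff (brk L (f a) (f b)) n) \<and>
     (\<forall>x. f (nij L x) = nij L (f x))"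

definition nonab_cocycle :: "'l::ab_group_add nlca \<Rightarrow> 'h::ab_group_add nlca
     \<Rightarrow> ('l \<Rightarrow> 'l \<Rightarrow> 'h poly) \<Rightarrow> ('l \<Rightarrow> 'h \<Rightarrow> 'h poly) \<Rightarrow> ('l \<Rightarrow> 'h) \<Rightarrow> bool" where
  "nonab_cocycle L H \<chi> \<rho> \<Phi> \<longleftrightarrow>
     cbilin (scal L) (scal L) (scal H) \<chi> \<and>
     cbilin (scal L) (scal H) (scal H) \<rho> \<and>
     clin (scal L) (scal H) \<Phi> \<and>
     \<comment> \<open>(i)\<close>
     (\<forall>p q h i j.
        coeff (\<rho> p (coeff (\<rho> q h) j)) i - coeff (\<rho> q (coeff (\<rho> p h) i)) j
        - lam_fam (\<lambda>k. psub (scal H) (der H) 0 1 1 (\<rho> (coeff (brk L p q) k) h)) i j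
        = lam_fam (\<lambda>k. psub (scal H) (der H) 0 1 1 (brk H (coeff (\<chi> p q) k) h)) i j) \<and>
     \<comment> \<open>(ii)\<close>
     (\<forall>p q r i j.
        coeff (\<rho> p (coeff (\<chi> q r) j)) i
        + coeff (\<rho> q (coeff (\<chi> r p) i)) j
        + lam_fam (\<lambda>k. psub (scal H) (der H) (-1) (-1) (-1) (\<rho> r (coeff (\<chi> p q) k))) i j
        - mu_fam (\<lambda>k. psub (scal H) (der H) 0 1 1 (\<chi> (coeff (brk L q r) k) p)) i j
        - lam_fam (\<lambda>k. psub (scal H) (der H) 0 1 1
                      (\<chi> (psub (scal L) (der L) (-1) (-1) 0 (brk L r p) k 0) q)) i j
        - lam_fam (\<lambda>k. psub (scal H) (der H) 0 1 1 (\<chi> (coeff (brk L p q) k) r)) i j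
        = 0) \<and>
     \<comment> \<open>(iii)\<close>
     (\<forall>p h n.
        coeff (\<rho> (nij L p) (nij H h)) n =
          nij H (coeff (\<rho> (nij L p) h) n + coeff (\<rho> p (nij H h)) n
                 - nij H (coeff (\<rho> p h) n))
          + nij H (coeff (brk H (\<Phi> p) h) n) - coeff (brk H (\<Phi> p) (nij H h)) n) \<and>
     \<comment> \<open>(iv)\<close>
     (\<forall>p q n.
        coeff (\<chi> (nij L p) (nij L q)) n
        - nij H (coeff (\<chi> (nij L p) q) n + coeff (\<chi> p (nij L q)) n - nij H (coeff (\<chi> p q) n))
        - \<Phi> (coeff (brk L (nij L p) q) n + coeff (brk L p (nij L q)) n - nij L (coeff (brk L p q) n))
        + coeff (\<rho> (nij L p) (\<Phi> q)) n
        - psub (scal H) (der H) (-1) (-1) 0 (\<rho> (nij L q) (\<Phi> p)) n 0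
        + nij H (psub (scal H) (der H) (-1) (-1) 0 (\<rho> q (\<Phi> p)) n 0
                 - coeff (\<rho> p (\<Phi> q)) n + \<Phi> (coeff (brk L p q) n))
        + coeff (brk H (\<Phi> p) (\<Phi> q)) n
        = 0)"

end

theory Submission
  imports Defs
begin

lemma cdlin_basic:
  assumes "cdlin s d s d f"
  shows "f 0 = 0" "\<And>x y. f (x + y) = f x + f y" "\<And>x y. f (x - y) = f x - f y"
    "\<And>x. f (- x) = - f x" "\<And>c x. f (s c x) = s c (f x)" "\<And>x. f (d x) = d (f x)"
proof -
  have add: "\<And>x y. f (x + y) = f x + f y" and sc: "\<And>c x. f (s c x) = s c (f x)"
    and dd: "\<And>x. f (d x) = d (f x)" using assms unfolding cdlin_def by auto
  show z: "f 0 = 0" using add[of 0 0] by simp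
  show m: "\<And>x. f (- x) = - f x" using add z by (metis add.right_inverse add_eq_0_iff)
  show "\<And>x y. f (x - y) = f x - f y" using add m by (metis diff_conv_add_uminus)
  show "\<And>x y. f (x + y) = f x + f y" by (rule add)
  show "\<And>c x. f (s c x) = s c (f x)" by (rule sc)
  show "\<And>x. f (d x) = d (f x)" by (rule dd)
qed

lemma cdlin_iter:
  assumes "cdlin s d s d f"
  shows "f ((d ^^ n) x) = (d ^^ n) (f x)"
  by (induction n) (simp_all add: cdlin_basic[OF assms])

lemma cdlin_sum:
  assumes "cdlin s d s d f"
  shows "f (sum g A) = sum (\<lambda>x. f (g x)) A"
  by (induction A rule: infinite_finite_induct) (simp_all add: cdlin_basic[OF assms])

lemma cdlin_inj0:
  assumes "cdlin s d s d f" "inj f"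
  shows "f x = 0 \<longleftrightarrow> x = 0"
  by (metis assms cdlin_basic(1) injD)

lemma psub_map:
  assumes "cdlin s d s d f" "inj f"
  shows "psub s d e a b (map_poly f P) y z = f (psub s d e a b P y z)"
proof -
  have deg: "degree (map_poly f P) = degree P"
    using cdlin_inj0[OF assms] by (intro degree_map_poly) blast
  show ?thesis
    unfolding psub_def deg
    by (simp add: cdlin_sum[OF assms(1)] coeff_map_poly cdlin_basic[OF assms(1)]
        cdlin_iter[OF assms(1)])
qed

lemma psub_map':
  assumes "cdlin s d s d f" "inj f"
  shows "psub s d e a b (map_poly f P) = (\<lambda>y z. f (psub s d e a b P y z))"
  by (intro ext) (rule psub_map[OF assms])

lemma lam_fam_push:
  assumes "cdlin s d s d f"
  shows "f (lam_fam F i j) = lam_fam (\<lambda>k a b. f (F k a b)) i j"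
  unfolding lam_fam_def by (simp add: cdlin_sum[OF assms])

lemma mu_fam_push:
  assumes "cdlin s d s d f"
  shows "f (mu_fam F i j) = mu_fam (\<lambda>k a b. f (F k a b)) i j"
  unfolding mu_fam_def by (simp add: cdlin_sum[OF assms])

lemma inv_cdlin:
  assumes "cdlin s d s d f" "bij f"
  shows "cdlin s d s d (inv f)"
proof -
  have i: "\<And>x. inv f (f x) = x" using assms(2) by (simp add: bij_is_inj)
  have fi: "\<And>x. f (inv f x) = x" using assms(2) by (simp add: bij_is_surj surj_f_inv_f)
  show ?thesis unfolding cdlin_def
    by (metis i fi cdlin_basic[OF assms(1)])
qed

lemma aut_brk:
  assumes "nlca_aut L f"
  shows "brk L (f a) (f b) = map_poly f (brk L a b)"
proof -
  have c: "cdlin (scal L) (der L) (scal L) (der L) f" using assms unfolding nlca_aut_def by auto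
  show ?thesis
    by (rule poly_eqI) (use assms in \<open>simp add: nlca_aut_def coeff_map_poly cdlin_basic[OF c]\<close>)
qed

lemma aut_inv_nij:
  assumes "nlca_aut L f"
  shows "inv f (nij L x) = nij L (inv f x)"
proof -
  have b: "bij f" using assms unfolding nlca_aut_def by auto
  have "f (nij L (inv f x)) = nij L x" using assms b unfolding nlca_aut_def
    by (simp add: bij_is_surj surj_f_inv_f)
  then show ?thesis using b by (metis bij_is_inj inv_f_f)
qed

theorem lemma6p2:
  fixes L :: "'l::ab_group_add nlca" and H :: "'h::ab_group_add nlca"
    and \<chi> :: "'l \<Rightarrow> 'l \<Rightarrow> 'h poly" and \<rho> :: "'l \<Rightarrow> 'h \<Rightarrow> 'h poly" and \<Phi> :: "'l \<Rightarrow> 'h"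
    and \<alpha> :: "'h \<Rightarrow> 'h" and \<beta> :: "'l \<Rightarrow> 'l"
  assumes "nij_lca L" and "nij_lca H"
    and "nonab_cocycle L H \<chi> \<rho> \<Phi>"
    and "nlca_aut H \<alpha>" and "nlca_aut L \<beta>"
  shows "nonab_cocycle L H
           (\<lambda>p q. map_poly \<alpha> (\<chi> (inv \<beta> p) (inv \<beta> q)))
           (\<lambda>p h. map_poly \<alpha> (\<rho> (inv \<beta> p) (inv \<alpha> h)))
           (\<lambda>p. \<alpha> (\<Phi> (inv \<beta> p)))"
proof -
  have ca: "cdlin (scal H) (der H) (scal H) (der H) \<alpha>" and ba: "bij \<alpha>"
    and na: "\<And>x. \<alpha> (nij H x) = nij H (\<alpha> x)"
    using assms(4) unfolding nlca_aut_def by auto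
  have cb: "cdlin (scal L) (der L) (scal L) (der L) \<beta>" and bb: "bij \<beta>"
    and nb: "\<And>x. \<beta> (nij L x) = nij L (\<beta> x)"
    using assms(5) unfolding nlca_aut_def by auto
  have ia: "inj \<alpha>" and ib: "inj \<beta>" using ba bb bij_is_inj by auto
  have cia: "cdlin (scal H) (der H) (scal H) (der H) (inv \<alpha>)" by (rule inv_cdlin[OF ca ba])
  have cib: "cdlin (scal L) (der L) (scal L) (der L) (inv \<beta>)" by (rule inv_cdlin[OF cb bb])
  have iaa: "\<And>x. inv \<alpha> (\<alpha> x) = x" using ia by simp
  have ibb: "\<And>x. inv \<beta> (\<beta> x) = x" using ib by simp
  have sa: "\<And>x. \<alpha> (inv \<alpha> x) = x" using ba by (simp add: bij_is_surj surj_f_inv_f)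
  have sb: "\<And>x. \<beta> (inv \<beta> x) = x" using bb by (simp add: bij_is_surj surj_f_inv_f)
  note A = cdlin_basic[OF ca] cdlin_basic[OF cia] cdlin_basic[OF cib]
  have Bo: "\<And>x y. \<beta> x + \<beta> y = \<beta> (x + y)" "\<And>x y. \<beta> x - \<beta> y = \<beta> (x - y)"
    "\<And>x. - \<beta> x = \<beta> (- x)"
    using cdlin_basic[OF cb] by auto
  have nb': "\<And>x. nij L (\<beta> x) = \<beta> (nij L x)" using nb by simp
  have brkN: "\<And>a b. brk H (\<alpha> a) (nij H (\<alpha> b)) = map_poly \<alpha> (brk H a (nij H b))"
    by (metis na aut_brk[OF assms(4)])
  note S = brkN A Bo nb' na iaa ibb aut_brk[OF assms(4)] aut_brk[OF assms(5)]
    psub_map'[OF ca ia] psub_map'[OF cb ib] cdlin_basic(1)[OF cb] lam_fam_push[OF ca] mu_fam_push[OF ca]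
    aut_inv_nij[OF assms(4)] coeff_map_poly
  have allb: "\<And>P. (\<And>x. P (\<beta> x)) \<Longrightarrow> P y" for y by (metis sb)
  have alla: "\<And>P. (\<And>x. P (\<alpha> x)) \<Longrightarrow> P y" for y by (metis sa)
  have C: "cbilin (scal L) (scal L) (scal H) \<chi>" "cbilin (scal L) (scal H) (scal H) \<rho>"
    "clin (scal L) (scal H) \<Phi>"
    and C1: "\<forall>p q h i j.
        coeff (\<rho> p (coeff (\<rho> q h) j)) i - coeff (\<rho> q (coeff (\<rho> p h) i)) j
        - lam_fam (\<lambda>k. psub (scal H) (der H) 0 1 1 (\<rho> (coeff (brk L p q) k) h)) i j
        = lam_fam (\<lambda>k. psub (scal H) (der H) 0 1 1 (brk H (coeff (\<chi> p q) k) h)) i j"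
    and C2: "\<forall>p q r i j.
        coeff (\<rho> p (coeff (\<chi> q r) j)) i
        + coeff (\<rho> q (coeff (\<chi> r p) i)) j
        + lam_fam (\<lambda>k. psub (scal H) (der H) (-1) (-1) (-1) (\<rho> r (coeff (\<chi> p q) k))) i j
        - mu_fam (\<lambda>k. psub (scal H) (der H) 0 1 1 (\<chi> (coeff (brk L q r) k) p)) i j
        - lam_fam (\<lambda>k. psub (scal H) (der H) 0 1 1
                      (\<chi> (psub (scal L) (der L) (-1) (-1) 0 (brk L r p) k 0) q)) i j
        - lam_fam (\<lambda>k. psub (scal H) (der H) 0 1 1 (\<chi> (coeff (brk L p q) k) r)) i j
        = 0"
    and C3: "\<forall>p h n.
        coeff (\<rho> (nij L p) (nij H h)) n =
          nij H (coeff (\<rho> (nij L p) h) n + coeff (\<rho> p (nij H h)) n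
                 - nij H (coeff (\<rho> p h) n))
          + nij H (coeff (brk H (\<Phi> p) h) n) - coeff (brk H (\<Phi> p) (nij H h)) n"
    and C4: "\<forall>p q n.
        coeff (\<chi> (nij L p) (nij L q)) n
        - nij H (coeff (\<chi> (nij L p) q) n + coeff (\<chi> p (nij L q)) n - nij H (coeff (\<chi> p q) n))
        - \<Phi> (coeff (brk L (nij L p) q) n + coeff (brk L p (nij L q)) n - nij L (coeff (brk L p q) n))
        + coeff (\<rho> (nij L p) (\<Phi> q)) n
        - psub (scal H) (der H) (-1) (-1) 0 (\<rho> (nij L q) (\<Phi> p)) n 0
        + nij H (psub (scal H) (der H) (-1) (-1) 0 (\<rho> q (\<Phi> p)) n 0
                 - coeff (\<rho> p (\<Phi> q)) n + \<Phi> (coeff (brk L p q) n))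
        + coeff (brk H (\<Phi> p) (\<Phi> q)) n
        = 0"
    using assms(3) unfolding nonab_cocycle_def by blast+
  show ?thesis
    unfolding nonab_cocycle_def
  proof (intro conjI allI)
    show "cbilin (scal L) (scal L) (scal H) (\<lambda>p q. map_poly \<alpha> (\<chi> (inv \<beta> p) (inv \<beta> q)))"
      using C(1) unfolding cbilin_def by (simp add: S)
    show "cbilin (scal L) (scal H) (scal H) (\<lambda>p h. map_poly \<alpha> (\<rho> (inv \<beta> p) (inv \<alpha> h)))"
      using C(2) unfolding cbilin_def by (simp add: S)
    show "clin (scal L) (scal H) (\<lambda>p. \<alpha> (\<Phi> (inv \<beta> p)))"
      using C(3) unfolding clin_def by (simp add: S)
  next
    fix p q h i j
    show "coeff (map_poly \<alpha> (\<rho> (inv \<beta> p) (inv \<alpha> (coeff (map_poly \<alpha> (\<rho> (inv \<beta> q) (inv \<alpha> h))) j)))) i -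
       coeff (map_poly \<alpha> (\<rho> (inv \<beta> q) (inv \<alpha> (coeff (map_poly \<alpha> (\<rho> (inv \<beta> p) (inv \<alpha> h))) i)))) j -
       lam_fam (\<lambda>k. psub (scal H) (der H) 0 1 1 (map_poly \<alpha> (\<rho> (inv \<beta> (coeff (brk L p q) k)) (inv \<alpha> h)))) i j =
       lam_fam (\<lambda>k. psub (scal H) (der H) 0 1 1 (brk H (coeff (map_poly \<alpha> (\<chi> (inv \<beta> p) (inv \<beta> q))) k) h)) i j"
    proof (rule allb[of _ p], rule allb[of _ q], rule alla[of _ h])
      fix p' q' h'
      show "coeff (map_poly \<alpha> (\<rho> (inv \<beta> (\<beta> p')) (inv \<alpha> (coeff (map_poly \<alpha> (\<rho> (inv \<beta> (\<beta> q')) (inv \<alpha> (\<alpha> h')))) j)))) i -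
       coeff (map_poly \<alpha> (\<rho> (inv \<beta> (\<beta> q')) (inv \<alpha> (coeff (map_poly \<alpha> (\<rho> (inv \<beta> (\<beta> p')) (inv \<alpha> (\<alpha> h')))) i)))) j -
       lam_fam (\<lambda>k. psub (scal H) (der H) 0 1 1 (map_poly \<alpha> (\<rho> (inv \<beta> (coeff (brk L (\<beta> p') (\<beta> q')) k)) (inv \<alpha> (\<alpha> h'))))) i j =
       lam_fam (\<lambda>k. psub (scal H) (der H) 0 1 1 (brk H (coeff (map_poly \<alpha> (\<chi> (inv \<beta> (\<beta> p')) (inv \<beta> (\<beta> q')))) k) (\<alpha> h'))) i j"
        using arg_cong[where f=\<alpha>, OF spec[OF spec[OF spec[OF spec[OF spec[OF C1, of p'], of q'], of h'], of i], of j]]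
        by (simp add: S)
    qed
  next
    fix p q r i j
    show "coeff (map_poly \<alpha> (\<rho> (inv \<beta> p) (inv \<alpha> (coeff (map_poly \<alpha> (\<chi> (inv \<beta> q) (inv \<beta> r))) j)))) i +
       coeff (map_poly \<alpha> (\<rho> (inv \<beta> q) (inv \<alpha> (coeff (map_poly \<alpha> (\<chi> (inv \<beta> r) (inv \<beta> p))) i)))) j +
       lam_fam (\<lambda>k. psub (scal H) (der H) (- 1) (- 1) (- 1) (map_poly \<alpha> (\<rho> (inv \<beta> r) (inv \<alpha> (coeff (map_poly \<alpha> (\<chi> (inv \<beta> p) (inv \<beta> q))) k))))) i j -
       mu_fam (\<lambda>k. psub (scal H) (der H) 0 1 1 (map_poly \<alpha> (\<chi> (inv \<beta> (coeff (brk L q r) k)) (inv \<beta> p)))) i j -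
       lam_fam (\<lambda>k. psub (scal H) (der H) 0 1 1 (map_poly \<alpha> (\<chi> (inv \<beta> (psub (scal L) (der L) (- 1) (- 1) 0 (brk L r p) k 0)) (inv \<beta> q)))) i j -
       lam_fam (\<lambda>k. psub (scal H) (der H) 0 1 1 (map_poly \<alpha> (\<chi> (inv \<beta> (coeff (brk L p q) k)) (inv \<beta> r)))) i j = 0"
    proof (rule allb[of _ p], rule allb[of _ q], rule allb[of _ r])
      fix p' q' r'
      have "\<alpha> (0::'h) = 0" by (simp add: S)
      then show "coeff (map_poly \<alpha> (\<rho> (inv \<beta> (\<beta> p')) (inv \<alpha> (coeff (map_poly \<alpha> (\<chi> (inv \<beta> (\<beta> q')) (inv \<beta> (\<beta> r')))) j)))) i +
       coeff (map_poly \<alpha> (\<rho> (inv \<beta> (\<beta> q')) (inv \<alpha> (coeff (map_poly \<alpha> (\<chi> (inv \<beta> (\<beta> r')) (inv \<beta> (\<beta> p')))) i)))) j +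
       lam_fam (\<lambda>k. psub (scal H) (der H) (- 1) (- 1) (- 1) (map_poly \<alpha> (\<rho> (inv \<beta> (\<beta> r')) (inv \<alpha> (coeff (map_poly \<alpha> (\<chi> (inv \<beta> (\<beta> p')) (inv \<beta> (\<beta> q')))) k))))) i j -
       mu_fam (\<lambda>k. psub (scal H) (der H) 0 1 1 (map_poly \<alpha> (\<chi> (inv \<beta> (coeff (brk L (\<beta> q') (\<beta> r')) k)) (inv \<beta> (\<beta> p'))))) i j -
       lam_fam (\<lambda>k. psub (scal H) (der H) 0 1 1 (map_poly \<alpha> (\<chi> (inv \<beta> (psub (scal L) (der L) (- 1) (- 1) 0 (brk L (\<beta> r') (\<beta> p')) k 0)) (inv \<beta> (\<beta> q'))))) i j -
       lam_fam (\<lambda>k. psub (scal H) (der H) 0 1 1 (map_poly \<alpha> (\<chi> (inv \<beta> (coeff (brk L (\<beta> p') (\<beta> q')) k)) (inv \<beta> (\<beta> r'))))) i j = 0"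
        using arg_cong[where f=\<alpha>, OF spec[OF spec[OF spec[OF spec[OF spec[OF C2, of p'], of q'], of r'], of i], of j]]
        by (simp add: S)
    qed
  next
    fix p h n
    show "coeff (map_poly \<alpha> (\<rho> (inv \<beta> (nij L p)) (inv \<alpha> (nij H h)))) n =
       nij H (coeff (map_poly \<alpha> (\<rho> (inv \<beta> (nij L p)) (inv \<alpha> h))) n + coeff (map_poly \<alpha> (\<rho> (inv \<beta> p) (inv \<alpha> (nij H h)))) n -
              nij H (coeff (map_poly \<alpha> (\<rho> (inv \<beta> p) (inv \<alpha> h))) n)) +
       nij H (coeff (brk H (\<alpha> (\<Phi> (inv \<beta> p))) h) n) -
       coeff (brk H (\<alpha> (\<Phi> (inv \<beta> p))) (nij H h)) n"
    proof (rule allb[of _ p], rule alla[of _ h])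
      fix p' h'
      show "coeff (map_poly \<alpha> (\<rho> (inv \<beta> (nij L (\<beta> p'))) (inv \<alpha> (nij H (\<alpha> h'))))) n =
       nij H (coeff (map_poly \<alpha> (\<rho> (inv \<beta> (nij L (\<beta> p'))) (inv \<alpha> (\<alpha> h')))) n + coeff (map_poly \<alpha> (\<rho> (inv \<beta> (\<beta> p')) (inv \<alpha> (nij H (\<alpha> h'))))) n -
              nij H (coeff (map_poly \<alpha> (\<rho> (inv \<beta> (\<beta> p')) (inv \<alpha> (\<alpha> h')))) n)) +
       nij H (coeff (brk H (\<alpha> (\<Phi> (inv \<beta> (\<beta> p')))) (\<alpha> h')) n) -
       coeff (brk H (\<alpha> (\<Phi> (inv \<beta> (\<beta> p')))) (nij H (\<alpha> h'))) n"
        using arg_cong[where f=\<alpha>, OF spec[OF spec[OF spec[OF C3, of p'], of h'], of n]]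
        by (simp add: S)
    qed
  next
    fix p q n
    show "coeff (map_poly \<alpha> (\<chi> (inv \<beta> (nij L p)) (inv \<beta> (nij L q)))) n -
       nij H (coeff (map_poly \<alpha> (\<chi> (inv \<beta> (nij L p)) (inv \<beta> q))) n + coeff (map_poly \<alpha> (\<chi> (inv \<beta> p) (inv \<beta> (nij L q)))) n -
              nij H (coeff (map_poly \<alpha> (\<chi> (inv \<beta> p) (inv \<beta> q))) n)) -
       \<alpha> (\<Phi> (inv \<beta> (coeff (brk L (nij L p) q) n + coeff (brk L p (nij L q)) n - nij L (coeff (brk L p q) n)))) +
       coeff (map_poly \<alpha> (\<rho> (inv \<beta> (nij L p)) (inv \<alpha> (\<alpha> (\<Phi> (inv \<beta> q)))))) n -
       psub (scal H) (der H) (- 1) (- 1) 0 (map_poly \<alpha> (\<rho> (inv \<beta> (nij L q)) (inv \<alpha> (\<alpha> (\<Phi> (inv \<beta> p)))))) n 0 +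
       nij H (psub (scal H) (der H) (- 1) (- 1) 0 (map_poly \<alpha> (\<rho> (inv \<beta> q) (inv \<alpha> (\<alpha> (\<Phi> (inv \<beta> p)))))) n 0 -
              coeff (map_poly \<alpha> (\<rho> (inv \<beta> p) (inv \<alpha> (\<alpha> (\<Phi> (inv \<beta> q)))))) n +
              \<alpha> (\<Phi> (inv \<beta> (coeff (brk L p q) n)))) +
       coeff (brk H (\<alpha> (\<Phi> (inv \<beta> p))) (\<alpha> (\<Phi> (inv \<beta> q)))) n = 0"
    proof (rule allb[of _ p], rule allb[of _ q])
      fix p' q'
      show "coeff (map_poly \<alpha> (\<chi> (inv \<beta> (nij L (\<beta> p'))) (inv \<beta> (nij L (\<beta> q'))))) n -
       nij H (coeff (map_poly \<alpha> (\<chi> (inv \<beta> (nij L (\<beta> p'))) (inv \<beta> (\<beta> q')))) n + coeff (map_poly \<alpha> (\<chi> (inv \<beta> (\<beta> p')) (inv \<beta> (nij L (\<beta> q'))))) n -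
              nij H (coeff (map_poly \<alpha> (\<chi> (inv \<beta> (\<beta> p')) (inv \<beta> (\<beta> q')))) n)) -
       \<alpha> (\<Phi> (inv \<beta> (coeff (brk L (nij L (\<beta> p')) (\<beta> q')) n + coeff (brk L (\<beta> p') (nij L (\<beta> q'))) n - nij L (coeff (brk L (\<beta> p') (\<beta> q')) n)))) +
       coeff (map_poly \<alpha> (\<rho> (inv \<beta> (nij L (\<beta> p'))) (inv \<alpha> (\<alpha> (\<Phi> (inv \<beta> (\<beta> q'))))))) n -
       psub (scal H) (der H) (- 1) (- 1) 0 (map_poly \<alpha> (\<rho> (inv \<beta> (nij L (\<beta> q'))) (inv \<alpha> (\<alpha> (\<Phi> (inv \<beta> (\<beta> p'))))))) n 0 +
       nij H (psub (scal H) (der H) (- 1) (- 1) 0 (map_poly \<alpha> (\<rho> (inv \<beta> (\<beta> q')) (inv \<alpha> (\<alpha> (\<Phi> (inv \<beta> (\<beta> p'))))))) n 0 -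
              coeff (map_poly \<alpha> (\<rho> (inv \<beta> (\<beta> p')) (inv \<alpha> (\<alpha> (\<Phi> (inv \<beta> (\<beta> q'))))))) n +
              \<alpha> (\<Phi> (inv \<beta> (coeff (brk L (\<beta> p') (\<beta> q')) n)))) +
       coeff (brk H (\<alpha> (\<Phi> (inv \<beta> (\<beta> p')))) (\<alpha> (\<Phi> (inv \<beta> (\<beta> q'))))) n = 0"
        using arg_cong[where f=\<alpha>, OF spec[OF spec[OF spec[OF C4, of p'], of q'], of n]]
        by (simp add: S)
    qed
  qed
qed

end
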